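(* Let $q$ be a real quadratic form on $\mathbb{R}^{1,3}$ (identified with the hermitian $2\times 2$ matrices as in the context), and let $Q$ be its symmetric $4\times 4$ matrix, $q(\mathbf{x})=\mathbf{x}^T Q\,\mathbf{x}$. Assume $Q$ is positive semidefinite and degenerate ($Q\ge 0$, $\dim\ker Q>0$). Assume $\ker Q$ contains a non-zero vector $\mathbf{n}=(n_0,\vec n)$ that is space-like or light-like, $\mathbf{n}\cdot\mathbf{n}=n_0^2-|\vec n|^2\le 0$. Define $f(\rho)=\sqrt{q(\mathbf{x})}$ for $\rho=\tfrac12(I+\vec x\cdot\vec\sigma)$ in the Bloch ball $\Omega$, with $\mathbf{x}=(1,\vec x)$. Then $f$ is a convex roof on $\Omega$. Equivalently, $$f(\rho)=\min\Big\{\sum_j p_j f(\pi_j)\ :\ \rho=\sum_j p_j\pi_j,\ \pi_j \text{ pure},\ p_j>0,\ \sum_j p_j=1\Big\}\qquad\text{for all }\rho\in\Omega.$$ Moreover, assume such an $\mathbf{n}$ can be chosen with $n_0=0$. Then the roof is flat: $\Omega$ is foliated into leaves, each the convex hull of some pure states, and $f$ is constant on each leaf.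
   Context: Hermitian $2\times2$ matrices are identified with Minkowski space $\mathbb{R}^{1,3}$ via $\mathbf{x}=(x_0,\vec x)\leftrightarrow \rho=\tfrac12(x_0 I+\vec x\cdot\vec\sigma)$, where $\vec\sigma$ are the Pauli matrices. The Minkowski product is $\mathbf{x}\cdot\mathbf{y}=x_0y_0-\vec x\cdot\vec y$. Under this identification $\det\rho=\tfrac14\mathbf{x}\cdot\mathbf{x}$ and $\mathrm{Tr}\rho=x_0$. The state space (Bloch ball) $\Omega$ is the set of $\mathbf{x}$ with $x_0=1$ and $|\vec x|\le 1$. Pure states are those with $|\vec x|=1$, i.e. the light-like vectors with $x_0=1$. A continuous function $f$ on $\Omega$ is a convex roof if it is convex and, for every $\rho\in\Omega$, there is a decomposition $\rho=\sum_j p_j\pi_j$ into pure states $\pi_j$ ($p_j>0$, $\sum p_j=1$) with $f(\rho)=\sum_j p_j f(\pi_j)$. The roof is flat if these decompositions can be chosen so that $f$ is constant on the convex hull of the $\pi_j$ occurring in each. *)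

theory Defs
  imports "HOL-Analysis.Analysis"
begin

text \<open>Minkowski space R^{1,3} is modelled as real^4; component 1 is the time
  component x_0, components 2,3,4 are the spatial components of vec x.\<close>

definition mink_vec :: "real \<Rightarrow> real^3 \<Rightarrow> real^4" where
  "mink_vec x0 xv = (\<chi> i. if i = 1 then x0 else if i = 2 then xv$1
                          else if i = 3 then xv$2 else xv$3)"

definition mink_time :: "real^4 \<Rightarrow> real" where
  "mink_time v = v$1"

definition mink_space :: "real^4 \<Rightarrow> real^3" where
  "mink_space v = (\<chi> i. if i = 1 then v$2 else if i = 2 then v$3 else v$4)"

definition mink_dot :: "real^4 \<Rightarrow> real^4 \<Rightarrow> real" where
  "mink_dot v w = mink_time v * mink_time w - mink_space v \<bullet> mink_space w"

text \<open>Bloch ball (states with x0 = 1, parametrised by the Bloch vector vec x)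
  and pure states (|vec x| = 1).\<close>
definition bloch_ball :: "(real^3) set" where
  "bloch_ball = {x. norm x \<le> 1}"

definition pure_states :: "(real^3) set" where
  "pure_states = {x. norm x = 1}"

definition roof_decomp :: "((real^3) \<Rightarrow> real) \<Rightarrow> real^3 \<Rightarrow> nat \<Rightarrow> (nat \<Rightarrow> real) \<Rightarrow> (nat \<Rightarrow> real^3) \<Rightarrow> bool" where
  "roof_decomp f \<rho> k p \<pi> \<longleftrightarrow>
     (\<forall>j<k. p j > 0 \<and> \<pi> j \<in> pure_states) \<and>
     (\<Sum>j<k. p j) = 1 \<and>
     \<rho> = (\<Sum>j<k. p j *\<^sub>R \<pi> j) \<and>
     f \<rho> = (\<Sum>j<k. p j * f (\<pi> j))"

definition convex_roof :: "((real^3) \<Rightarrow> real) \<Rightarrow> bool" where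
  "convex_roof f \<longleftrightarrow> continuous_on bloch_ball f \<and> convex_on bloch_ball f \<and>
     (\<forall>\<rho>\<in>bloch_ball. \<exists>k p \<pi>. roof_decomp f \<rho> k p \<pi>)"

definition flat_roof :: "((real^3) \<Rightarrow> real) \<Rightarrow> bool" where
  "flat_roof f \<longleftrightarrow> continuous_on bloch_ball f \<and> convex_on bloch_ball f \<and>
     (\<forall>\<rho>\<in>bloch_ball. \<exists>k p \<pi>. roof_decomp f \<rho> k p \<pi> \<and>
        (\<forall>y\<in>convex hull (\<pi> ` {..<k}). f y = f \<rho>))"

end

theory Submission imports Defs begin

lemma mink_vec_time[simp]: "mink_time (mink_vec a x) = a"
  by (simp add: mink_time_def mink_vec_def)
lemma mink_vec_space[simp]: "mink_space (mink_vec a x) = x"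
  by (simp add: mink_space_def mink_vec_def vec_eq_iff forall_3)

lemma mink_vec_eta: "mink_vec (mink_time v) (mink_space v) = v"
  by (simp add: mink_space_def mink_vec_def mink_time_def vec_eq_iff forall_4)

lemma mink_vec_add: "mink_vec a x + mink_vec b y = mink_vec (a+b) (x+y)"
  by (simp add: mink_vec_def vec_eq_iff)
lemma mink_vec_scale: "c *\<^sub>R mink_vec a x = mink_vec (c*a) (c *\<^sub>R x)"
  by (simp add: mink_vec_def vec_eq_iff)
lemma mink_vec_zero: "mink_vec 0 0 = 0"
  by (simp add: mink_vec_def vec_eq_iff)

lemma qsym:
  fixes Q :: "real^4^4"
  assumes "transpose Q = Q"
  shows "u \<bullet> (Q *v v) = v \<bullet> (Q *v u)"
proof -
  have "u \<bullet> (Q *v v) = (u v* Q) \<bullet> v" by (simp add: dot_lmul_matrix)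
  also have "u v* Q = transpose Q *v u" by simp
  finally show ?thesis using assms by (simp add: inner_commute)
qed

lemma discr:
  fixes A B C :: real
  assumes "\<forall>t. 0 \<le> A + 2*t*B + t^2*C" "0 \<le> C"
  shows "B^2 \<le> A*C"
proof (cases "C = 0")
  case True
  show ?thesis
  proof (rule ccontr)
    assume "\<not> ?thesis"
    then have "B \<noteq> 0" using True by auto
    have "0 \<le> A + 2*(-(A+1)/(2*B))*B + (-(A+1)/(2*B))^2*C" using assms(1) by blast
    then show False using True \<open>B \<noteq> 0\<close> by (simp add: field_simps)
  qed
next
  case False
  then have C: "C > 0" using assms(2) by auto
  have "0 \<le> A + 2*(-B/C)*B + (-B/C)^2*C" using assms(1) by blast
  then have "0 \<le> (A*C - B^2)/C" using C by (simp add: field_simps power2_eq_square)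
  then show ?thesis using C by (simp add: zero_le_divide_iff)
qed

lemma qtri:
  fixes Q :: "real^4^4"
  assumes sym: "transpose Q = Q" and psd: "\<forall>v. 0 \<le> v \<bullet> (Q *v v)"
  shows "sqrt ((u+v) \<bullet> (Q *v (u+v))) \<le> sqrt (u \<bullet> (Q *v u)) + sqrt (v \<bullet> (Q *v v))"
proof -
  define A where "A = u \<bullet> (Q *v u)"
  define B where "B = u \<bullet> (Q *v v)"
  define C where "C = v \<bullet> (Q *v v)"
  have exp: "(u + t *\<^sub>R v) \<bullet> (Q *v (u + t *\<^sub>R v)) = A + 2*t*B + t^2*C" for t
    using qsym[OF sym, of v u]
    by (simp add: A_def B_def C_def matrix_vector_right_distrib matrix_vector_mult_scaleR
        inner_add_left inner_add_right power2_eq_square algebra_simps)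
  have "\<forall>t. 0 \<le> A + 2*t*B + t^2*C" using psd exp by metis
  moreover have "0 \<le> C" "0 \<le> A" using psd by (auto simp: A_def C_def)
  ultimately have "B^2 \<le> A*C" using discr by blast
  then have "sqrt (B^2) \<le> sqrt (A*C)" using real_sqrt_le_mono by blast
  then have "\<bar>B\<bar> \<le> sqrt A * sqrt C" by (simp add: real_sqrt_mult)
  then have "A + 2*B + C \<le> (sqrt A + sqrt C)^2"
    using \<open>0 \<le> C\<close> \<open>0 \<le> A\<close> by (simp add: power2_sum)
  then have "sqrt (A + 2*B + C) \<le> sqrt A + sqrt C"
    using \<open>0 \<le> C\<close> \<open>0 \<le> A\<close> by (simp add: real_le_lsqrt)
  moreover have "(u+v) \<bullet> (Q *v (u+v)) = A + 2*B + C" using exp[of 1] by simp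
  ultimately show ?thesis by (simp add: A_def C_def)
qed

lemma qscale:
  fixes Q :: "real^4^4"
  shows "sqrt ((c *\<^sub>R u) \<bullet> (Q *v (c *\<^sub>R u))) = \<bar>c\<bar> * sqrt (u \<bullet> (Q *v u))"
proof -
  have "(c *\<^sub>R u) \<bullet> (Q *v (c *\<^sub>R u)) = c^2 * (u \<bullet> (Q *v u))"
    by (simp add: matrix_vector_mult_scaleR power2_eq_square)
  then show ?thesis by (simp add: real_sqrt_mult)
qed

lemma qker:
  fixes Q :: "real^4^4"
  assumes sym: "transpose Q = Q" and "Q *v n = 0"
  shows "sqrt ((c *\<^sub>R u + t *\<^sub>R n) \<bullet> (Q *v (c *\<^sub>R u + t *\<^sub>R n))) = \<bar>c\<bar> * sqrt (u \<bullet> (Q *v u))"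
proof -
  have "n \<bullet> (Q *v u) = 0" using qsym[OF sym, of n u] assms(2) by simp
  then have "(c *\<^sub>R u + t *\<^sub>R n) \<bullet> (Q *v (c *\<^sub>R u + t *\<^sub>R n)) = (c *\<^sub>R u) \<bullet> (Q *v (c *\<^sub>R u))"
    using assms(2) by (simp add: matrix_vector_right_distrib matrix_vector_mult_scaleR inner_add_left)
  then show ?thesis using qscale by simp
qed


definition ff :: "real^4^4 \<Rightarrow> real^3 \<Rightarrow> real" where
  "ff Q xv = sqrt (mink_vec 1 xv \<bullet> (Q *v mink_vec 1 xv))"

lemma mink_vec_lin: "linear (mink_vec 0)"
proof (rule linearI)
  show "mink_vec 0 (b1 + b2) = mink_vec 0 b1 + mink_vec 0 b2" for b1 b2
    by (simp add: mink_vec_add)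
  show "mink_vec 0 (r *\<^sub>R b) = r *\<^sub>R mink_vec 0 b" for r b
    by (simp add: mink_vec_scale)
qed

lemma ff_cont: "continuous_on S (ff Q)"
proof -
  have e: "(\<lambda>xv. mink_vec 1 0 + mink_vec 0 xv) = mink_vec 1" by (rule ext) (simp add: mink_vec_add)
  have bl: "bounded_linear (mink_vec 0)" using mink_vec_lin linear_conv_bounded_linear by blast
  have c: "continuous_on S (mink_vec 1)"
    using continuous_on_add[OF continuous_on_const linear_continuous_on[OF bl], of S "mink_vec 1 0"]
    unfolding e .
  have c2: "continuous_on S (\<lambda>xv. Q *v mink_vec 1 xv)"
    using continuous_on_compose[OF c linear_continuous_on[OF matrix_vector_mul_bounded_linear[of Q]]]
    by (simp add: o_def)
  have c3: "continuous_on S (\<lambda>xv. mink_vec 1 xv \<bullet> (Q *v mink_vec 1 xv))"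
    by (rule continuous_on_inner[OF c c2])
  show ?thesis unfolding ff_def by (rule continuous_on_real_sqrt[OF c3])
qed

lemma ff_convex:
  assumes sym: "transpose Q = Q" and psd: "\<forall>v. 0 \<le> v \<bullet> (Q *v v)"
  shows "convex_on bloch_ball (ff Q)"
proof (rule convex_onI)
  show "convex bloch_ball" 
    using convex_cball[of "0::real^3" 1] by (simp add: bloch_ball_def cball_def dist_norm)
  fix t :: real and x y assume t: "0 < t" "t < 1"
  have e: "mink_vec 1 ((1 - t) *\<^sub>R x + t *\<^sub>R y) = (1 - t) *\<^sub>R mink_vec 1 x + t *\<^sub>R mink_vec 1 y"
    by (simp add: mink_vec_add mink_vec_scale)
  show "ff Q ((1 - t) *\<^sub>R x + t *\<^sub>R y) \<le> (1 - t) * ff Q x + t * ff Q y"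
    unfolding ff_def e using qtri[OF sym psd, of "(1 - t) *\<^sub>R mink_vec 1 x" "t *\<^sub>R mink_vec 1 y"]
      qscale[where Q=Q and c="1-t"] qscale[where Q=Q and c=t] t by simp
qed

lemma ff_chord:
  assumes sym: "transpose Q = Q" and "Q *v mink_vec n0 nv = 0"
  shows "ff Q (x + t *\<^sub>R (nv - n0 *\<^sub>R x)) = \<bar>1 - t*n0\<bar> * ff Q x"
proof -
  have e: "mink_vec 1 (x + t *\<^sub>R (nv - n0 *\<^sub>R x)) = (1 - t*n0) *\<^sub>R mink_vec 1 x + t *\<^sub>R mink_vec n0 nv"
    by (simp add: mink_vec_def vec_eq_iff algebra_simps)
  show ?thesis unfolding ff_def e using qker[OF sym assms(2)] by simp
qed

lemma exists_root:
  fixes x w :: "real^3"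
  assumes "norm x < 1" "w \<noteq> 0"
  shows "\<exists>t>0. norm (x + t *\<^sub>R w) = 1"
proof -
  define b where "b = 2 / norm w"
  have b: "b > 0" using assms by (simp add: b_def)
  have "norm (b *\<^sub>R w) \<le> norm (x + b *\<^sub>R w) + norm x"
    by (metis add_diff_cancel_left' norm_triangle_ineq4 add.commute)
  moreover have "norm (b *\<^sub>R w) = 2" using assms b by (simp add: b_def)
  ultimately have "1 \<le> norm (x + b *\<^sub>R w)" using assms by simp
  moreover have "norm (x + 0 *\<^sub>R w) \<le> 1" using assms by simp
  moreover have "continuous_on {0..b} (\<lambda>t. norm (x + t *\<^sub>R w))"
    by (intro continuous_intros)
  ultimately obtain t where t: "0 \<le> t" "t \<le> b" "norm (x + t *\<^sub>R w) = 1"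
    using IVT'[of "\<lambda>t. norm (x + t *\<^sub>R w)" 0 1 b] b by auto
  then have "t \<noteq> 0" using assms by auto
  then have "t > 0" using t(1) by linarith
  then show ?thesis using t(3) by blast
qed

lemma alpha_nonneg:
  fixes x nv :: "real^3"
  assumes "norm x < 1" "norm (x + t *\<^sub>R (nv - n0 *\<^sub>R x)) = 1" "n0*n0 \<le> nv \<bullet> nv"
  shows "0 \<le> 1 - t*n0"
proof (rule ccontr)
  assume "\<not> ?thesis"
  then have tn: "t*n0 > 1" by simp
  then have n0: "n0 \<noteq> 0" by auto
  define s where "s = 1/n0"
  define l where "l = 1/(t*n0)"
  have l: "0 < l" "l < 1" using tn by (auto simp: l_def)
  have t0: "t \<noteq> 0" using tn by auto
  have ls: "l * t = s" using tn n0 t0 by (simp add: l_def s_def field_simps)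
  define z where "z = x + s *\<^sub>R (nv - n0 *\<^sub>R x)"
  have "z = (1 - l) *\<^sub>R x + l *\<^sub>R (x + t *\<^sub>R (nv - n0 *\<^sub>R x))"
    using ls by (simp add: z_def algebra_simps)
  then have "norm z \<le> norm ((1 - l) *\<^sub>R x) + norm (l *\<^sub>R (x + t *\<^sub>R (nv - n0 *\<^sub>R x)))"
    by (simp only: norm_triangle_ineq)
  also have "\<dots> = (1 - l) * norm x + l"
    using l assms(2) by simp
  finally have z1: "norm z \<le> (1 - l) * norm x + l" .
  have "(1 - l) * norm x < (1 - l) * 1" using l assms(1) by (intro mult_strict_left_mono) auto
  moreover have "(1 - l) * (1::real) = 1 - l" by (rule mult_1_right)
  ultimately have zl: "norm z < 1" using z1 by linarith
  have "z = s *\<^sub>R nv" using n0 by (simp add: z_def s_def algebra_simps)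
  then have "z \<bullet> z = s^2 * (nv \<bullet> nv)" by (simp add: power2_eq_square)
  then have "norm z ^ 2 = s^2 * (nv \<bullet> nv)" by (simp only: power2_norm_eq_inner)
  moreover have "s^2 * (n0*n0) = 1" using n0 by (simp add: s_def power2_eq_square)
  moreover have "s^2 * (n0*n0) \<le> s^2 * (nv \<bullet> nv)" using assms(3) by (intro mult_left_mono) auto
  ultimately have "1 \<le> norm z ^ 2" by linarith
  moreover have "norm z ^ 2 < 1" using zl by (simp add: power_less_one_iff abs_less_iff)
  ultimately show False by linarith
qed


lemma alg1: "(a::real) * ((1 - t1*n0) * F) + b * ((1 - t2*n0) * F) = ((a + b) - n0 * (a * t1 + b * t2)) * F"
  by (simp add: algebra_simps)
lemma alg2: "(a::real) *\<^sub>R (x + t1 *\<^sub>R w) + b *\<^sub>R (x + t2 *\<^sub>R (w::real^3)) = (a + b) *\<^sub>R x + (a * t1 + b * t2) *\<^sub>R w"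
  by (simp add: algebra_simps)
lemma alg3: "(1 - u) *\<^sub>R (x + t1 *\<^sub>R w) + u *\<^sub>R (x + t2 *\<^sub>R (w::real^3)) = x + ((1 - u) * t1 + u * t2) *\<^sub>R w"
  by (simp add: algebra_simps)

lemma roof_interior:
  fixes Q :: "real^4^4" and n :: "real^4" and x :: "real^3"
  assumes sym: "transpose Q = Q" and Qn: "Q *v n = 0" and nn: "n \<noteq> 0"
    and md: "mink_dot n n \<le> 0" and x: "norm x < 1"
  shows "\<exists>k p \<pi>. roof_decomp (ff Q) x k p \<pi> \<and>
     (mink_time n = 0 \<longrightarrow> (\<forall>y\<in>convex hull (\<pi> ` {..<k}). ff Q y = ff Q x))"
proof -
  define n0 where "n0 = mink_time n"
  define nv where "nv = mink_space n"
  have neq: "n = mink_vec n0 nv" using mink_vec_eta unfolding n0_def nv_def by simp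
  have Qn': "Q *v mink_vec n0 nv = 0" using Qn neq by simp
  have md': "n0*n0 \<le> nv \<bullet> nv" using md by (simp add: mink_dot_def n0_def nv_def)
  define w where "w = nv - n0 *\<^sub>R x"
  have xx: "x \<bullet> x < 1"
  proof -
    have "norm x ^ 2 < 1" using x by (simp add: power_less_one_iff abs_less_iff)
    then show ?thesis by (simp add: power2_norm_eq_inner)
  qed
  have w0: "w \<noteq> 0"
  proof
    assume "w = 0"
    then have nvx: "nv = n0 *\<^sub>R x" unfolding w_def by (metis eq_iff_diff_eq_0)
    then have e: "nv \<bullet> nv = n0*n0 * (x \<bullet> x)" by simp
    have "n0 = 0"
    proof (rule ccontr)
      assume "n0 \<noteq> 0"
      then have "n0*n0 > 0" by (metis mult_pos_pos mult_neg_neg linorder_neq_iff)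
      then have "n0*n0 * (x \<bullet> x) < n0*n0 * 1" using xx by (intro mult_strict_left_mono) auto
      then show False using md' e by simp
    qed
    then have "n = 0" using neq nvx by (simp add: mink_vec_zero)
    then show False using nn by simp
  qed
  obtain t2 where t2: "t2 > 0" "norm (x + t2 *\<^sub>R w) = 1" using exists_root[OF x w0] by blast
  have mw0: "- w \<noteq> 0" using w0 by simp
  obtain s1 where s1: "s1 > 0" "norm (x + s1 *\<^sub>R (- w)) = 1" using exists_root[OF x mw0] by blast
  define t1 where "t1 = - s1"
  have t1: "t1 < 0" "norm (x + t1 *\<^sub>R w) = 1" using s1 by (auto simp: t1_def)
  have a1: "0 \<le> 1 - t1*n0" using alpha_nonneg[OF x _ md'] t1(2) unfolding w_def by blast
  have a2: "0 \<le> 1 - t2*n0" using alpha_nonneg[OF x _ md'] t2(2) unfolding w_def by blast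
  have fc: "ff Q (x + t *\<^sub>R w) = \<bar>1 - t*n0\<bar> * ff Q x" for t
    using ff_chord[OF sym Qn', of x t] by (simp add: w_def)
  have f1: "ff Q (x + t1 *\<^sub>R w) = (1 - t1*n0) * ff Q x" using fc[of t1] a1 by simp
  have f2: "ff Q (x + t2 *\<^sub>R w) = (1 - t2*n0) * ff Q x" using fc[of t2] a2 by simp
  define T where "T = (\<lambda>j::nat. if j = 0 then t1 else t2)"
  define p where "p = (\<lambda>j::nat. if j = 0 then t2/(t2-t1) else -t1/(t2-t1))"
  define \<pi> where "\<pi> = (\<lambda>j. x + T j *\<^sub>R w)"
  have d: "t2 - t1 > 0" using t1 t2 by simp
  have dn: "t2 - t1 \<noteq> 0" using d by simp
  have p1: "p 0 + p 1 = 1"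
  proof -
    have "p 0 + p 1 = t2/(t2-t1) + (-t1)/(t2-t1)" by (simp add: p_def)
    also have "\<dots> = (t2 + -t1)/(t2-t1)" by (rule add_divide_distrib[symmetric])
    also have "\<dots> = 1" using dn by simp
    finally show ?thesis .
  qed
  have p2: "p 0 * t1 + p 1 * t2 = 0"
  proof -
    have "p 0 * t1 + p 1 * t2 = (t2 * t1)/(t2-t1) + (-t1 * t2)/(t2-t1)" by (simp add: p_def)
    also have "\<dots> = (t2 * t1 + -t1 * t2)/(t2-t1)" by (rule add_divide_distrib[symmetric])
    also have "\<dots> = 0" by simp
    finally show ?thesis .
  qed
  have j2: "j = 0 \<or> j = 1" if "j < 2" for j :: nat using that by auto
  have s2: "(\<Sum>j<2. h j) = h 0 + h 1" for h :: "nat \<Rightarrow> 'a::comm_monoid_add"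
    by (simp add: numeral_2_eq_2)
  have pi0: "\<pi> 0 = x + t1 *\<^sub>R w" and pi1: "\<pi> 1 = x + t2 *\<^sub>R w" by (simp_all add: \<pi>_def T_def)
  have dec: "roof_decomp (ff Q) x 2 p \<pi>"
    unfolding roof_decomp_def
  proof (intro conjI)
    show "\<forall>j<2. 0 < p j \<and> \<pi> j \<in> pure_states"
    proof (intro allI impI)
      fix j :: nat assume "j < 2"
      then consider "j = 0" | "j = 1" using j2 by blast
      then show "0 < p j \<and> \<pi> j \<in> pure_states"
      proof cases
        case 1
        have "0 < t2/(t2-t1)" using t2(1) d by (rule divide_pos_pos)
        moreover have "norm (x + t1 *\<^sub>R w) = 1" by (rule t1(2))
        ultimately show ?thesis using 1 by (simp add: p_def \<pi>_def T_def pure_states_def)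
      next
        case 2
        have "0 < (-t1)/(t2-t1)" using t1(1) d by (intro divide_pos_pos) simp_all
        moreover have "norm (x + t2 *\<^sub>R w) = 1" by (rule t2(2))
        ultimately show ?thesis using 2 unfolding p_def \<pi>_def T_def pure_states_def by simp
      qed
    qed
    show "(\<Sum>j<2. p j) = 1" using p1 s2[of p] by simp
    have "(\<Sum>j<2. p j *\<^sub>R \<pi> j) = p 0 *\<^sub>R \<pi> 0 + p 1 *\<^sub>R \<pi> 1" by (rule s2)
    also have "\<dots> = (p 0 + p 1) *\<^sub>R x + (p 0 * t1 + p 1 * t2) *\<^sub>R w"
      unfolding pi0 pi1 by (rule alg2)
    finally show "x = (\<Sum>j<2. p j *\<^sub>R \<pi> j)" using p1 p2 by simp
    have "(\<Sum>j<2. p j * ff Q (\<pi> j)) = p 0 * ff Q (\<pi> 0) + p 1 * ff Q (\<pi> 1)" by (rule s2)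
    also have "\<dots> = p 0 * ((1 - t1*n0) * ff Q x) + p 1 * ((1 - t2*n0) * ff Q x)"
      unfolding pi0 pi1 f1 f2 ..
    also have "\<dots> = ((p 0 + p 1) - n0 * (p 0 * t1 + p 1 * t2)) * ff Q x" by (rule alg1)
    also have "\<dots> = ff Q x" using p1 p2 by simp
    finally show "ff Q x = (\<Sum>j<2. p j * ff Q (\<pi> j))" by simp
  qed
  have flat: "\<forall>y\<in>convex hull (\<pi> ` {..<2}). ff Q y = ff Q x" if "mink_time n = 0"
  proof
    fix y assume y: "y \<in> convex hull (\<pi> ` {..<2})"
    have "\<pi> ` {..<2} = {\<pi> 0, \<pi> 1}" by (auto simp: numeral_2_eq_2 lessThan_Suc)
    then have "y \<in> closed_segment (\<pi> 0) (\<pi> 1)" using y by (simp add: segment_convex_hull)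
    then obtain u where "y = (1 - u) *\<^sub>R \<pi> 0 + u *\<^sub>R \<pi> 1" by (auto simp: closed_segment_def)
    then have "y = x + ((1 - u) * t1 + u * t2) *\<^sub>R w" unfolding pi0 pi1 alg3 .
    then have "ff Q y = \<bar>1 - ((1 - u) * t1 + u * t2) * n0\<bar> * ff Q x" using fc by simp
    moreover have "n0 = 0" using that by (simp add: n0_def)
    ultimately show "ff Q y = ff Q x" by simp
  qed
  have "roof_decomp (ff Q) x 2 p \<pi> \<and>
     (mink_time n = 0 \<longrightarrow> (\<forall>y\<in>convex hull (\<pi> ` {..<2}). ff Q y = ff Q x))"
    using dec flat by (intro conjI impI)
  then show ?thesis by (rule exI[where x=2, OF exI[where x=p, OF exI[where x=\<pi>]]])
qed

lemma roof_pure: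
  assumes "norm x = 1"
  shows "roof_decomp f x 1 (\<lambda>_. 1) (\<lambda>_. x) \<and> (\<forall>y\<in>convex hull ((\<lambda>_. x) ` {..<1::nat}). f y = f x)"
  using assms by (simp add: roof_decomp_def pure_states_def lessThan_Suc)

lemma flat_point:
  fixes Q :: "real^4^4"
  assumes sym: "transpose Q = Q" and n: "n \<noteq> 0" "Q *v n = 0" "mink_dot n n \<le> 0" "mink_time n = 0"
    and r: "\<rho> \<in> bloch_ball"
  shows "\<exists>k p \<pi>. roof_decomp (ff Q) \<rho> k p \<pi> \<and> (\<forall>y\<in>convex hull (\<pi> ` {..<k}). ff Q y = ff Q \<rho>)"
proof (cases "norm \<rho> = 1")
  case True
  have "roof_decomp (ff Q) \<rho> 1 (\<lambda>_. 1) (\<lambda>_. \<rho>) \<and>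
     (\<forall>y\<in>convex hull ((\<lambda>_. \<rho>) ` {..<1::nat}). ff Q y = ff Q \<rho>)"
    by (rule roof_pure[OF True])
  then show ?thesis by (rule exI[where x=1, OF exI[where x="\<lambda>_. 1", OF exI[where x="\<lambda>_. \<rho>"]]])
next
  case False
  then have "norm \<rho> < 1" using r by (simp add: bloch_ball_def)
  then obtain k p \<pi> where kp: "roof_decomp (ff Q) \<rho> k p \<pi>"
    "mink_time n = 0 \<longrightarrow> (\<forall>y\<in>convex hull (\<pi> ` {..<k}). ff Q y = ff Q \<rho>)"
    using roof_interior[OF sym n(2) n(1) n(3)] by blast
  have "\<forall>y\<in>convex hull (\<pi> ` {..<k}). ff Q y = ff Q \<rho>" using kp(2) n(4) by (rule mp)
  with kp(1) show ?thesis by (rule exI[where x=k, OF exI[where x=p, OF exI[where x=\<pi>, OF conjI]]])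
qed

lemma roof_point:
  fixes Q :: "real^4^4"
  assumes sym: "transpose Q = Q" and n: "n \<noteq> 0" "Q *v n = 0" "mink_dot n n \<le> 0"
    and r: "\<rho> \<in> bloch_ball"
  shows "\<exists>k p \<pi>. roof_decomp (ff Q) \<rho> k p \<pi>"
proof (cases "norm \<rho> = 1")
  case True
  have "roof_decomp (ff Q) \<rho> 1 (\<lambda>_. 1) (\<lambda>_. \<rho>)"
    using roof_pure[OF True, of "ff Q"] by (rule conjunct1)
  then show ?thesis by (rule exI[where x=1, OF exI[where x="\<lambda>_. 1", OF exI[where x="\<lambda>_. \<rho>"]]])
next
  case False
  then have "norm \<rho> < 1" using r by (simp add: bloch_ball_def)
  then obtain k p \<pi> where kp: "roof_decomp (ff Q) \<rho> k p \<pi>"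
    using roof_interior[OF sym n(2) n(1) n(3)] by blast
  then show ?thesis by (rule exI[where x=k, OF exI[where x=p, OF exI[where x=\<pi>]]])
qed

theorem theorem2:
  fixes Q :: "real^4^4"
  assumes sym: "transpose Q = Q"
    and psd: "\<forall>v. 0 \<le> v \<bullet> (Q *v v)"
    and ker: "\<exists>n. n \<noteq> 0 \<and> Q *v n = 0 \<and> mink_dot n n \<le> 0"
  shows "convex_roof (\<lambda>xv. sqrt (mink_vec 1 xv \<bullet> (Q *v mink_vec 1 xv)))
    \<and> ((\<exists>n. n \<noteq> 0 \<and> Q *v n = 0 \<and> mink_dot n n \<le> 0 \<and> mink_time n = 0)
        \<longrightarrow> flat_roof (\<lambda>xv. sqrt (mink_vec 1 xv \<bullet> (Q *v mink_vec 1 xv))))"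
proof -
  have fe: "(\<lambda>xv. sqrt (mink_vec 1 xv \<bullet> (Q *v mink_vec 1 xv))) = ff Q"
    by (rule ext) (simp add: ff_def)
  have c: "continuous_on bloch_ball (ff Q)" by (rule ff_cont)
  have cv: "convex_on bloch_ball (ff Q)" by (rule ff_convex[OF sym psd])
  from ker obtain n0 where nn0: "n0 \<noteq> 0 \<and> Q *v n0 = 0 \<and> mink_dot n0 n0 \<le> 0" by (rule exE)
  from nn0 have n0: "n0 \<noteq> 0" "Q *v n0 = 0" "mink_dot n0 n0 \<le> 0" by simp_all
  have A: "convex_roof (ff Q)"
    unfolding convex_roof_def
  proof (intro conjI c cv ballI)
    fix \<rho> assume "\<rho> \<in> bloch_ball"
    then show "\<exists>k p \<pi>. roof_decomp (ff Q) \<rho> k p \<pi>" by (rule roof_point[OF sym n0])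
  qed
  have B: "flat_roof (ff Q)" if "\<exists>n. n \<noteq> 0 \<and> Q *v n = 0 \<and> mink_dot n n \<le> 0 \<and> mink_time n = 0"
  proof -
    from that obtain n where nn: "n \<noteq> 0 \<and> Q *v n = 0 \<and> mink_dot n n \<le> 0 \<and> mink_time n = 0"
      by (rule exE)
    from nn have n: "n \<noteq> 0" "Q *v n = 0" "mink_dot n n \<le> 0" "mink_time n = 0" by simp_all
    show ?thesis
      unfolding flat_roof_def
    proof (intro conjI c cv ballI)
      fix \<rho> assume "\<rho> \<in> bloch_ball"
      then show "\<exists>k p \<pi>. roof_decomp (ff Q) \<rho> k p \<pi> \<and> (\<forall>y\<in>convex hull (\<pi> ` {..<k}). ff Q y = ff Q \<rho>)"
        by (rule flat_point[OF sym n])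
    qed
  qed
  show ?thesis unfolding fe by (intro conjI impI A B)
qed

end
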